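(* Let $M$, $(p_j)_{j\in M}$, $m$ and $LP$ be as follows: $M$ is a finite set of item types, $(p_j)$ is a probability distribution on $M$, $m\ge 1$, and $$LP=\max \sum_{i,S}x_{i,S}w_i(S)\quad\text{s.t.}\quad \sum_{i,S}x_{i,S}c_j(S)\le p_j m\ \ \forall j;\qquad \sum_S x_{i,S}=1\ \ \forall i;\qquad x_{i,S}\ge 0,$$ with $S$ ranging over multisets of at most $m$ items and $c_j(S)$ the multiplicity of $j$ in $S$. Assume the valuations $w_1,\dots,w_n:\mathbb{Z}_+^M\to\mathbb{R}$ are monotone and have the property of diminishing returns. Fix any partial allocation $(T_1,\dots,T_n)$ of multisets. Let the next item $j$ be drawn from $(p_j)$ and allocated greedily, i.e., to an agent maximizing $w_i(T_i+j)-w_i(T_i)$. Then the expected increase in welfare is at least $\frac1m\big(LP-\sum_i w_i(T_i)\big)$.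
   Context: Multisets over $M$ are identified with vectors in $\mathbb{Z}_+^M$. $T+j$ adds one copy of $j$ to $T$. A function $f:\mathbb{Z}_+^M\to\mathbb{R}$ has the property of diminishing returns if for all $x\le y$ (coordinatewise) and every unit vector $e_j$, $f(x+e_j)-f(x)\ge f(y+e_j)-f(y)$. It is monotone if $f(x)\le f(y)$ whenever $x\le y$. *)

theory Defs
  imports Complex_Main "HOL-Library.Multiset"
begin

text \<open>Item types form the finite type 'a (so M = UNIV). Multisets over M are
 'a multiset; the coordinatewise order on Z_+^M is the multiset inclusion order (subseteq_mset).
 Agents are 0..n-1.\<close>

definition monotone_val :: "('a multiset \<Rightarrow> real) \<Rightarrow> bool" where
  "monotone_val f \<longleftrightarrow> (\<forall>x y. x \<subseteq># y \<longrightarrow> f x \<le> f y)"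

definition diminishing_returns :: "('a multiset \<Rightarrow> real) \<Rightarrow> bool" where
  "diminishing_returns f \<longleftrightarrow>
     (\<forall>x y j. x \<subseteq># y \<longrightarrow> f (x + {#j#}) - f x \<ge> f (y + {#j#}) - f y)"

definition bundles :: "nat \<Rightarrow> ('a::finite) multiset set" where
  "bundles m = {S. size S \<le> m}"

definition lp_feasible ::
  "nat \<Rightarrow> nat \<Rightarrow> (('a::finite) \<Rightarrow> real) \<Rightarrow> (nat \<Rightarrow> 'a multiset \<Rightarrow> real) \<Rightarrow> bool" where
  "lp_feasible n m p x \<longleftrightarrow>
     (\<forall>j. (\<Sum>i<n. \<Sum>S\<in>bundles m. x i S * real (count S j)) \<le> p j * real m) \<and>
     (\<forall>i<n. (\<Sum>S\<in>bundles m. x i S) = 1) \<and>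
     (\<forall>i<n. \<forall>S\<in>bundles m. x i S \<ge> 0)"

text \<open>The LP optimum (the maximum exists; Sup equals it).\<close>
definition LP ::
  "nat \<Rightarrow> nat \<Rightarrow> (('a::finite) \<Rightarrow> real) \<Rightarrow> (nat \<Rightarrow> 'a multiset \<Rightarrow> real) \<Rightarrow> real" where
  "LP n m p w = Sup {(\<Sum>i<n. \<Sum>S\<in>bundles m. x i S * w i S) | x. lp_feasible n m p x}"

end

theory Submission
  imports Defs
begin

lemma finite_bundles: "finite (bundles m :: ('a::finite) multiset set)"
proof -
  have "bundles m = (\<Union>k\<le>m. multisets_of_size (UNIV::'a set) k)"
    by (auto simp: bundles_def multisets_of_size_def)
  thus ?thesis by auto
qed

lemma empty_in_bundles: "{#} \<in> bundles m"
  by (simp add: bundles_def)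

lemma dr_sum:
  fixes f :: "('a::finite) multiset \<Rightarrow> real"
  assumes "diminishing_returns f"
  shows "f (T + S) \<le> f T + (\<Sum>j\<in>UNIV. real (count S j) * (f (T + {#j#}) - f T))"
proof (induction S)
  case empty then show ?case by simp
next
  case (add x S)
  have d: "f (T + S + {#x#}) - f (T + S) \<le> f (T + {#x#}) - f T"
    using assms unfolding diminishing_returns_def by auto
  have "(\<Sum>j\<in>UNIV. real (count (add_mset x S) j) * (f (T + {#j#}) - f T))
      = (\<Sum>j\<in>UNIV. real (count S j) * (f (T + {#j#}) - f T) + (if j = x then f (T + {#j#}) - f T else 0))"
    by (rule sum.cong) (auto simp: algebra_simps)
  also have "\<dots> = (\<Sum>j\<in>UNIV. real (count S j) * (f (T + {#j#}) - f T)) + (f (T + {#x#}) - f T)"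
    by (simp add: sum.distrib)
  finally show ?case using add d by simp
qed

theorem lemma4p6:
  fixes p :: "'a::finite \<Rightarrow> real"
    and m n :: nat
    and w :: "nat \<Rightarrow> 'a multiset \<Rightarrow> real"
    and T :: "nat \<Rightarrow> 'a multiset"
    and g :: "'a \<Rightarrow> nat"
  assumes p_nonneg: "\<And>j. p j \<ge> 0"
    and p_sum: "(\<Sum>j\<in>UNIV. p j) = 1"
    and m_pos: "m \<ge> 1"
    and mono: "\<And>i. i < n \<Longrightarrow> monotone_val (w i)"
    and dr: "\<And>i. i < n \<Longrightarrow> diminishing_returns (w i)"
    and g_agent: "\<And>j. g j < n"
    and g_greedy: "\<And>j i. i < n \<Longrightarrow>
        w i (T i + {#j#}) - w i (T i) \<le> w (g j) (T (g j) + {#j#}) - w (g j) (T (g j))"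
  shows "(\<Sum>j\<in>UNIV. p j * (w (g j) (T (g j) + {#j#}) - w (g j) (T (g j))))
         \<ge> (LP n m p w - (\<Sum>i<n. w i (T i))) / real m"
proof -
  define D where "D j = w (g j) (T (g j) + {#j#}) - w (g j) (T (g j))" for j
  have D_nn: "D j \<ge> 0" for j
    using mono[OF g_agent[of j]] unfolding monotone_val_def D_def by simp
  define E where "E = (\<Sum>j\<in>UNIV. p j * D j)"
  have key: "w i S \<le> w i (T i) + (\<Sum>j\<in>UNIV. real (count S j) * D j)" if "i < n" for i S
  proof -
    have "w i S \<le> w i (T i + S)"
      using mono[OF that] unfolding monotone_val_def by simp
    also have "\<dots> \<le> w i (T i) + (\<Sum>j\<in>UNIV. real (count S j) * (w i (T i + {#j#}) - w i (T i)))"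
      by (rule dr_sum[OF dr[OF that]])
    also have "\<dots> \<le> w i (T i) + (\<Sum>j\<in>UNIV. real (count S j) * D j)"
      unfolding D_def by (intro add_left_mono sum_mono mult_left_mono g_greedy that) auto
    finally show ?thesis .
  qed
  have bound: "v \<le> (\<Sum>i<n. w i (T i)) + real m * E"
    if vin: "v \<in> {(\<Sum>i<n. \<Sum>S\<in>bundles m. x i S * w i S) | x. lp_feasible n m p x}" for v
  proof -
    obtain x where v: "v = (\<Sum>i<n. \<Sum>S\<in>bundles m. x i S * w i S)" and f: "lp_feasible n m p x"
      using vin by auto
    have c1: "\<And>j. (\<Sum>i<n. \<Sum>S\<in>bundles m. x i S * real (count S j)) \<le> p j * real m"
      and c2: "\<And>i. i < n \<Longrightarrow> (\<Sum>S\<in>bundles m. x i S) = 1"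
      and c3: "\<And>i S. i < n \<Longrightarrow> S \<in> bundles m \<Longrightarrow> x i S \<ge> 0"
      using f unfolding lp_feasible_def by auto
    have "v \<le> (\<Sum>i<n. \<Sum>S\<in>bundles m. x i S * (w i (T i) + (\<Sum>j\<in>UNIV. real (count S j) * D j)))"
      unfolding v by (intro sum_mono mult_left_mono key c3) auto
    also have "\<dots> = (\<Sum>i<n. w i (T i) * (\<Sum>S\<in>bundles m. x i S))
        + (\<Sum>j\<in>UNIV. D j * (\<Sum>i<n. \<Sum>S\<in>bundles m. x i S * real (count S j)))"
      by (simp add: algebra_simps sum.distrib sum_distrib_left sum_distrib_right
          sum.swap[of _ "bundles m" UNIV] sum.swap[of _ "{..<n}" UNIV])
    also have "\<dots> = (\<Sum>i<n. w i (T i))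
        + (\<Sum>j\<in>UNIV. D j * (\<Sum>i<n. \<Sum>S\<in>bundles m. x i S * real (count S j)))"
      by (simp add: c2)
    also have "\<dots> \<le> (\<Sum>i<n. w i (T i)) + (\<Sum>j\<in>UNIV. D j * (p j * real m))"
      by (intro add_left_mono sum_mono mult_left_mono c1 D_nn)
    also have "\<dots> = (\<Sum>i<n. w i (T i)) + real m * E"
      unfolding E_def by (simp add: sum_distrib_left algebra_simps)
    finally show ?thesis .
  qed
  have ne: "{(\<Sum>i<n. \<Sum>S\<in>bundles m. x i S * w i S) | x. lp_feasible n m p x} \<noteq> {}"
  proof -
    define x0 where "x0 i S = (if S = {#} then 1 else 0::real)" for i :: nat and S :: "'a multiset"
    have z: "(\<Sum>S\<in>bundles m. x0 i S * real (count S j)) = 0" for i j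
      by (rule sum.neutral) (auto simp: x0_def)
    have o: "(\<Sum>S\<in>bundles m. x0 i S) = 1" for i
      unfolding x0_def by (subst sum.delta[OF finite_bundles]) (simp add: empty_in_bundles)
    have "lp_feasible n m p x0"
      unfolding lp_feasible_def using z o p_nonneg by (auto simp: x0_def)
    thus ?thesis by blast
  qed
  have "LP n m p w \<le> (\<Sum>i<n. w i (T i)) + real m * E"
    unfolding LP_def by (rule cSup_least[OF ne bound])
  hence "LP n m p w - (\<Sum>i<n. w i (T i)) \<le> real m * E" by simp
  hence "(LP n m p w - (\<Sum>i<n. w i (T i))) / real m \<le> E"
    using m_pos by (simp add: divide_le_eq mult.commute)
  thus ?thesis unfolding E_def D_def .
qed

end
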